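(* Let $m\in\mathbb{N}$ and let $X=\{a_1,\dots,a_n\}\subset\mathbb{R}^m$ be a finite point cloud with at least two points, equipped with the Euclidean metric $d_X$. Let $Y=\rho_{\mathrm{UTD}}(X)\subset\mathcal{S}(\mathbb{C}^{m+1})$, let $d_Y$ be the Hilbert--Schmidt metric restricted to $Y$, and let $\lambda=r(X)\sqrt{m(m+1)}$. Then the (Vietoris--Rips) persistent homology of $(X,d_X)$ equals the persistent homology of $(Y,\lambda\,d_Y)$, i.e., for every $k\ge0$ the degree-$k$ persistence vector spaces are isomorphic (equivalently, they have the same persistence diagrams).
   Context: Notation: $\bar a=\frac1n\sum_i a_i$, $\mathrm{diam}(X)=\max_{i,j}\lVert a_i-a_j\rVert$, $r(X)=\mathrm{diam}(X)/2$. $R_m$ is the $(m+1)\times(m+1)$ orthogonal matrix with, for $i,j\le m$, $(R_m)_{ii}=\frac{1+(m-1)\sqrt{m+1}}{m\sqrt{m+1}}$, $(R_m)_{ij}=\frac{1-\sqrt{m+1}}{m\sqrt{m+1}}$ ($i\neq j$), $(R_m)_{m+1,j}=-\frac{1}{\sqrt{m+1}}$ ($j\le m$), $(R_m)_{i,m+1}=\frac1{\sqrt{m+1}}$ (all $i$). The uniform transformation is $\mathcal{T}_X(x)=\frac{1}{r(X)\sqrt{m(m+1)}}R_m\begin{bmatrix}x-\bar a\\0\end{bmatrix}+\frac{1}{m+1}\mathbf{1}_{m+1}$, and $\rho_{\mathrm{UTD}}(x)=\sum_{j=1}^{m+1}\mathcal{T}_X(x)_j|j\rangle\langle j|$ (diagonal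 density matrix). Hilbert--Schmidt metric: $d_{\mathrm{HS}}(\rho,\sigma)=\sqrt{\mathrm{Tr}[(\rho-\sigma)^\dagger(\rho-\sigma)]}$. For a finite metric space $(Z,d_Z)$ and $\epsilon\ge0$, the Vietoris--Rips complex $\mathcal{R}^\epsilon(Z,d_Z)$ is the abstract simplicial complex whose simplices are nonempty subsets $\sigma\subseteq Z$ with $\mathrm{diam}(\sigma)<\epsilon$ (all singletons included); for $\epsilon\le\epsilon'$ there are inclusions $\mathcal{R}^\epsilon\hookrightarrow\mathcal{R}^{\epsilon'}$. The degree-$k$ persistent homology of $(Z,d_Z)$ is the persistence vector space $\epsilon\mapsto H_k(\mathcal{R}^\epsilon(Z,d_Z);\mathbb{F})$ (simplicial homology over a fixed field $\mathbb{F}$) together with the linear maps induced by these inclusions. *)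

theory Defs
  imports "HOL-Analysis.Analysis"
begin

text \<open>Points of R^m are elements of real^'m, m = CARD('m). Coordinates of C^(m+1)
  are indexed by 'm option: Some i are the first m coordinates, None is coordinate m+1.\<close>

definition mean_pt :: "(real^'m) set \<Rightarrow> real^'m" where
  "mean_pt X = (1 / real (card X)) *\<^sub>R (\<Sum>a\<in>X. a)"

definition diam_pc :: "(real^'m) set \<Rightarrow> real" where
  "diam_pc X = Max {dist a b | a b. a \<in> X \<and> b \<in> X}"

definition rad_pc :: "(real^'m) set \<Rightarrow> real" where
  "rad_pc X = diam_pc X / 2"

definition Rmat :: "'m::finite option \<Rightarrow> 'm option \<Rightarrow> real" where
  "Rmat i j = (let m = real CARD('m) in
     (case (i, j) of
        (Some a, Some b) \<Rightarrow> if a = b then (1 + (m - 1) * sqrt (m + 1)) / (m * sqrt (m + 1))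
                           else (1 - sqrt (m + 1)) / (m * sqrt (m + 1))
      | (None, Some b) \<Rightarrow> - 1 / sqrt (m + 1)
      | (_, None) \<Rightarrow> 1 / sqrt (m + 1)))"

definition pad0 :: "real^'m \<Rightarrow> 'm option \<Rightarrow> real" where
  "pad0 x i = (case i of Some a \<Rightarrow> x $ a | None \<Rightarrow> 0)"

definition unif_transf :: "(real^'m::finite) set \<Rightarrow> real^'m \<Rightarrow> real^('m option)" where
  "unif_transf X x = (\<chi> j. (1 / (rad_pc X * sqrt (real CARD('m) * (real CARD('m) + 1)))) *
        (\<Sum>i\<in>UNIV. Rmat j i * pad0 (x - mean_pt X) i) + 1 / (real CARD('m) + 1))"

definition rho_utd :: "(real^'m::finite) set \<Rightarrow> real^'m \<Rightarrow> complex^('m option)^('m option)" where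
  "rho_utd X x = (\<chi> i j. if i = j then complex_of_real (unif_transf X x $ j) else 0)"

definition mat_adj :: "complex^'n^'n \<Rightarrow> complex^'n^'n" where
  "mat_adj A = (\<chi> i j. cnj (A $ j $ i))"

text \<open>Hilbert--Schmidt metric (the trace is real and nonnegative; we take its real part).\<close>
definition hs_dist :: "complex^'n^'n \<Rightarrow> complex^'n^'n \<Rightarrow> real" where
  "hs_dist \<rho> \<sigma> = sqrt (Re (trace (mat_adj (\<rho> - \<sigma>) ** (\<rho> - \<sigma>))))"

definition rips :: "'a set \<Rightarrow> ('a \<Rightarrow> 'a \<Rightarrow> real) \<Rightarrow> real \<Rightarrow> 'a set set" where
  "rips Z d \<epsilon> = {\<sigma>. \<sigma> \<noteq> {} \<and> finite \<sigma> \<and> \<sigma> \<subseteq> Z \<and>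
       Max {d u v | u v. u \<in> \<sigma> \<and> v \<in> \<sigma>} < \<epsilon>}"

definition osimplices :: "'a set set \<Rightarrow> nat \<Rightarrow> 'a list set" where
  "osimplices K k = {vs. length vs = Suc k \<and> distinct vs \<and> set vs \<in> K}"

text \<open>Simplicial k-chains with coefficients in a field: alternating functions on
  ordered k-simplices (the usual oriented chain group C_k(K;F)).\<close>
definition chains :: "'a set set \<Rightarrow> nat \<Rightarrow> ('a list \<Rightarrow> 'f::field) set" where
  "chains K k = {c. (\<forall>vs. vs \<notin> osimplices K k \<longrightarrow> c vs = 0) \<and>
      (\<forall>vs\<in>osimplices K k. \<forall>p. p permutes {..<Suc k} \<longrightarrow>
          c (map (\<lambda>i. vs ! p i) [0..<Suc k]) = of_int (sign p) * c vs)}"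

text \<open>Boundary map: (bd c)(u_0..u_{k-1}) = sum over w of c(w,u_0,..,u_{k-1}),
  which is the alternating-function form of the usual boundary.\<close>
definition bd :: "'a set set \<Rightarrow> ('a list \<Rightarrow> 'f::field) \<Rightarrow> 'a list \<Rightarrow> 'f" where
  "bd K c us = (if us \<noteq> [] \<and> distinct us \<and> set us \<in> K
      then (\<Sum>w\<in>{w. w \<notin> set us \<and> insert w (set us) \<in> K}. c (w # us)) else 0)"

definition cycles :: "'a set set \<Rightarrow> nat \<Rightarrow> ('a list \<Rightarrow> 'f::field) set" where
  "cycles K k = {c \<in> chains K k. bd K c = (\<lambda>_. 0)}"

definition boundaries :: "'a set set \<Rightarrow> nat \<Rightarrow> ('a list \<Rightarrow> 'f::field) set" where
  "boundaries K k = bd K ` chains K (Suc k)"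

definition hclass :: "('a list \<Rightarrow> 'f::field) set \<Rightarrow> ('a list \<Rightarrow> 'f) \<Rightarrow> ('a list \<Rightarrow> 'f) set" where
  "hclass B z = {(\<lambda>v. z v + b v) | b. b \<in> B}"

text \<open>H_k(K;F) = Z_k / B_k, elements are cosets of B_k.\<close>
definition homology :: "'a set set \<Rightarrow> nat \<Rightarrow> ('a list \<Rightarrow> 'f::field) set set" where
  "homology K k = hclass (boundaries K k) ` cycles K k"

text \<open>Isomorphism of the degree-k persistence vector spaces of two filtrations
  (K1 eps)_eps and (K2 eps)_eps: a family of linear bijections between the homology
  spaces commuting with the maps induced by inclusions ([z] maps to [z]).\<close>
definition ph_iso :: "'f::field itself \<Rightarrow> (real \<Rightarrow> 'a set set) \<Rightarrow> (real \<Rightarrow> 'b set set) \<Rightarrow> nat \<Rightarrow> bool" where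
  "ph_iso _ K1 K2 k = (\<exists>\<phi> :: real \<Rightarrow> ('a list \<Rightarrow> 'f) set \<Rightarrow> ('b list \<Rightarrow> 'f) set.
     (\<forall>\<epsilon>. bij_betw (\<phi> \<epsilon>) (homology (K1 \<epsilon>) k) (homology (K2 \<epsilon>) k)) \<and>
     (\<forall>\<epsilon>. \<forall>z\<in>cycles (K1 \<epsilon>) k. \<forall>w\<in>cycles (K1 \<epsilon>) k. \<forall>a::'f.
        \<forall>z'\<in>\<phi> \<epsilon> (hclass (boundaries (K1 \<epsilon>) k) z). \<forall>w'\<in>\<phi> \<epsilon> (hclass (boundaries (K1 \<epsilon>) k) w).
          (\<lambda>v. z' v + w' v) \<in> \<phi> \<epsilon> (hclass (boundaries (K1 \<epsilon>) k) (\<lambda>v. z v + w v)) \<and>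
          (\<lambda>v. a * z' v) \<in> \<phi> \<epsilon> (hclass (boundaries (K1 \<epsilon>) k) (\<lambda>v. a * z v))) \<and>
     (\<forall>\<epsilon> \<epsilon>'. \<epsilon> \<le> \<epsilon>' \<longrightarrow> (\<forall>z\<in>cycles (K1 \<epsilon>) k. \<forall>z'\<in>\<phi> \<epsilon> (hclass (boundaries (K1 \<epsilon>) k) z).
          \<phi> \<epsilon>' (hclass (boundaries (K1 \<epsilon>') k) z) = hclass (boundaries (K2 \<epsilon>') k) z')))"

end

theory Submission
  imports Defs
begin


definition tr :: "('b \<Rightarrow> 'a) \<Rightarrow> 'b set \<Rightarrow> ('a list \<Rightarrow> 'f::zero) \<Rightarrow> 'b list \<Rightarrow> 'f" where
  "tr h A c = (\<lambda>vs. if set vs \<subseteq> A then c (map h vs) else 0)"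

definition suppd :: "'a set \<Rightarrow> ('a list \<Rightarrow> 'f::zero) \<Rightarrow> bool" where
  "suppd X c = (\<forall>vs. c vs \<noteq> 0 \<longrightarrow> set vs \<subseteq> X)"

lemma set_perm_list:
  assumes "p permutes {..<Suc k}" "length vs = Suc k"
  shows "set (map (\<lambda>i. vs ! p i) [0..<Suc k]) = set vs"
proof -
  have "set (map (\<lambda>i. vs ! p i) [0..<Suc k]) = (\<lambda>i. vs ! p i) ` {..<Suc k}"
    by (simp only: set_map set_upt atLeast0LessThan)
  also have "\<dots> = (\<lambda>i. vs ! i) ` (p ` {..<Suc k})"
    by (simp only: image_image)
  also have "\<dots> = (\<lambda>i. vs ! i) ` {..<Suc k}" by (simp only: permutes_image[OF assms(1)])
  also have "\<dots> = set (map (\<lambda>i. vs ! i) [0..<Suc k])" by (simp only: set_map set_upt atLeast0LessThan)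
  also have "\<dots> = set vs" by (simp only: assms(2)[symmetric] map_nth)
  finally show ?thesis .
qed

lemma chains_zero: "c \<in> chains K k \<Longrightarrow> vs \<notin> osimplices K k \<Longrightarrow> c vs = 0"
  unfolding chains_def by simp

lemma chains_alt: "c \<in> chains K k \<Longrightarrow> vs \<in> osimplices K k \<Longrightarrow> p permutes {..<Suc k} \<Longrightarrow>
   c (map (\<lambda>i. vs ! p i) [0..<Suc k]) = of_int (sign p) * c vs"
  unfolding chains_def by simp

lemma chains_supp: assumes K: "K \<subseteq> Pow X" and c: "c \<in> chains K k" shows "suppd X c"
  unfolding suppd_def
proof (intro allI impI)
  fix vs assume "c vs \<noteq> 0"
  then have "vs \<in> osimplices K k" using chains_zero[OF c] by blast
  then show "set vs \<subseteq> X" using K unfolding osimplices_def by auto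
qed

lemma bd_supp: "K \<subseteq> Pow X \<Longrightarrow> suppd X (bd K c)"
  unfolding bd_def suppd_def by auto

lemma chains_add: "c1 \<in> chains K k \<Longrightarrow> c2 \<in> chains K k \<Longrightarrow> (\<lambda>v. c1 v + c2 v) \<in> chains K k"
  unfolding chains_def mem_Collect_eq by (simp add: distrib_left)

lemma chains_smult: "c1 \<in> chains K k \<Longrightarrow> (\<lambda>v. a * c1 v) \<in> chains K k"
  unfolding chains_def mem_Collect_eq by (simp add: mult.left_commute)

lemma bd_add: "bd K (\<lambda>v. c1 v + c2 v) = (\<lambda>v. bd K c1 v + bd K c2 v)"
  unfolding bd_def by (auto simp: sum.distrib)

lemma bd_smult: "bd K (\<lambda>v. a * c1 v) = (\<lambda>v. a * bd K c1 v)"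
  unfolding bd_def by (auto simp: sum_distrib_left)

lemma bnd_add: "b1 \<in> boundaries K k \<Longrightarrow> b2 \<in> boundaries K k \<Longrightarrow> (\<lambda>v. b1 v + b2 v) \<in> boundaries K k"
proof -
  assume "b1 \<in> boundaries K k" "b2 \<in> boundaries K k"
  then obtain c1 c2 where "c1 \<in> chains K (Suc k)" "c2 \<in> chains K (Suc k)" "b1 = bd K c1" "b2 = bd K c2"
    unfolding boundaries_def by blast
  then have "(\<lambda>v. b1 v + b2 v) = bd K (\<lambda>v. c1 v + c2 v)" "(\<lambda>v. c1 v + c2 v) \<in> chains K (Suc k)"
    using chains_add[of c1 K "Suc k" c2] bd_add[of K c1 c2] by simp_all
  then show ?thesis unfolding boundaries_def by (rule image_eqI)
qed

lemma bnd_smult: "b1 \<in> boundaries K k \<Longrightarrow> (\<lambda>v. a * b1 v) \<in> boundaries K k"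
proof -
  assume "b1 \<in> boundaries K k"
  then obtain c1 where "c1 \<in> chains K (Suc k)" "b1 = bd K c1"
    unfolding boundaries_def by blast
  then have "(\<lambda>v. a * b1 v) = bd K (\<lambda>v. a * c1 v)" "(\<lambda>v. a * c1 v) \<in> chains K (Suc k)"
    using chains_smult[of c1 K "Suc k" a] bd_smult[of K a c1] by simp_all
  then show ?thesis unfolding boundaries_def by (rule image_eqI)
qed

lemma hclass_shift:
  assumes "b \<in> boundaries K k"
  shows "hclass (boundaries K k) (\<lambda>v. z v + b v) = hclass (boundaries K k) (z :: _ \<Rightarrow> 'f::field)"
proof
  show "hclass (boundaries K k) (\<lambda>v. z v + b v) \<subseteq> hclass (boundaries K k) z"
  proof
    fix x assume "x \<in> hclass (boundaries K k) (\<lambda>v. z v + b v)"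
    then obtain b' where b': "b' \<in> boundaries K k" "x = (\<lambda>v. z v + b v + b' v)" unfolding hclass_def by auto
    have "(\<lambda>v. b v + b' v) \<in> boundaries K k" using bnd_add assms b' by blast
    moreover have "x = (\<lambda>v. z v + (b v + b' v))" using b' by (simp add: add.assoc)
    ultimately show "x \<in> hclass (boundaries K k) z" unfolding hclass_def mem_Collect_eq
      by (intro exI[of _ "\<lambda>v. b v + b' v"]) simp
  qed
next
  show "hclass (boundaries K k) z \<subseteq> hclass (boundaries K k) (\<lambda>v. z v + b v)"
  proof
    fix x assume "x \<in> hclass (boundaries K k) z"
    then obtain b' where b': "b' \<in> boundaries K k" "x = (\<lambda>v. z v + b' v)" unfolding hclass_def by auto
    have "(\<lambda>v. (-1) * b v) \<in> boundaries K k" using bnd_smult assms by blast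
    then have "(\<lambda>v. b' v + (-1) * b v) \<in> boundaries K k" using bnd_add b' by blast
    moreover have "x = (\<lambda>v. (z v + b v) + (b' v + (-1) * b v))" using b' by (simp add: algebra_simps)
    ultimately show "x \<in> hclass (boundaries K k) (\<lambda>v. z v + b v)" unfolding hclass_def mem_Collect_eq
      by (intro exI[of _ "\<lambda>v. b' v + (-1) * b v"]) simp
  qed
qed

lemma tr_add: "tr h A (\<lambda>v. a v + b v) = (\<lambda>v. tr h A a v + tr h A (b :: _ \<Rightarrow> 'f::field) v)"
  by (simp add: tr_def fun_eq_iff)

lemma hclass_img: "hclass B z = (\<lambda>b v. z v + b v) ` B"
  by (auto simp: hclass_def)

lemma hclass_tr: "tr h A ` hclass B z = hclass (tr h A ` B) (tr h A (z :: _ \<Rightarrow> 'f::field))"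
  by (simp add: hclass_img image_image tr_add)

locale bpair =
  fixes X :: "'a set" and Y :: "'b set" and f :: "'a \<Rightarrow> 'b" and g :: "'b \<Rightarrow> 'a"
  assumes fX: "\<And>x. x \<in> X \<Longrightarrow> f x \<in> Y" and gfx: "\<And>x. x \<in> X \<Longrightarrow> g (f x) = x"
    and gY: "\<And>y. y \<in> Y \<Longrightarrow> g y \<in> X" and fgy: "\<And>y. y \<in> Y \<Longrightarrow> f (g y) = y"

lemma bpair_swap: "bpair X Y f g \<Longrightarrow> bpair Y X g f"
  by (simp add: bpair_def)

context bpair begin

lemma inj_g: "inj_on g Y" by (metis fgy inj_onI)

lemma imgK: "K1 \<subseteq> Pow X \<Longrightarrow> A \<subseteq> Y \<Longrightarrow> (A \<in> (`) f ` K1) \<longleftrightarrow> (g ` A \<in> K1)"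
proof
  assume "K1 \<subseteq> Pow X" "A \<subseteq> Y" "A \<in> (`) f ` K1"
  then obtain s where "s \<in> K1" "A = f ` s" "s \<subseteq> X" by auto
  moreover have "g ` f ` s = s" using gfx \<open>s \<subseteq> X\<close> by (force simp: image_image)
  ultimately show "g ` A \<in> K1" by simp
next
  assume "K1 \<subseteq> Pow X" "A \<subseteq> Y" "g ` A \<in> K1"
  moreover have "A = f ` g ` A" using \<open>A \<subseteq> Y\<close> fgy by (force simp: image_image)
  ultimately show "A \<in> (`) f ` K1" by blast
qed

lemma K2_sub: "K1 \<subseteq> Pow X \<Longrightarrow> (`) f ` K1 \<subseteq> Pow Y" using fX by auto

lemma KK: "K1 \<subseteq> Pow X \<Longrightarrow> (`) g ` (`) f ` K1 = K1"
proof -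
  assume a: "K1 \<subseteq> Pow X"
  have "g ` f ` s = s" if "s \<in> K1" for s
    using that a gfx by (force simp: image_image)
  then show ?thesis by (simp add: image_image)
qed

lemma osimp: "K1 \<subseteq> Pow X \<Longrightarrow> set vs \<subseteq> Y \<Longrightarrow>
   vs \<in> osimplices ((`) f ` K1) k \<longleftrightarrow> map g vs \<in> osimplices K1 k"
  unfolding osimplices_def using imgK[of K1 "set vs"] inj_on_subset[OF inj_g]
  by (auto simp: distinct_map)

lemma chains_tr:
  assumes K: "K1 \<subseteq> Pow X" and c: "c \<in> chains K1 k"
  shows "tr g Y c \<in> chains ((`) f ` K1) k"
  unfolding chains_def
proof (intro CollectI conjI allI impI ballI)
  fix vs assume "vs \<notin> osimplices ((`) f ` K1) k"
  then show "tr g Y c vs = 0" using c osimp[OF K, of vs k] unfolding tr_def chains_def by auto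
next
  fix vs p assume vs: "vs \<in> osimplices ((`) f ` K1) k" and p: "p permutes {..<Suc k}"
  have Y: "set vs \<subseteq> Y" using vs K2_sub[OF K] unfolding osimplices_def by auto
  have len: "length vs = Suc k" using vs unfolding osimplices_def by auto
  have m: "map g vs \<in> osimplices K1 k" using osimp[OF K Y] vs by simp
  have Y2: "set (map (\<lambda>i. vs ! p i) [0..<Suc k]) \<subseteq> Y" using set_perm_list[OF p len] Y by simp
  have pi: "i < Suc k \<Longrightarrow> p i < Suc k" for i using permutes_in_image[OF p, of i] by simp
  have eq: "map g (map (\<lambda>i. vs ! p i) [0..<Suc k]) = map (\<lambda>i. map g vs ! p i) [0..<Suc k]"
    using pi len by auto
  have "c (map (\<lambda>i. map g vs ! p i) [0..<Suc k]) = of_int (sign p) * c (map g vs)"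
    using c unfolding chains_def mem_Collect_eq using m p by (elim conjE) (drule bspec, assumption, blast)
  then show "tr g Y c (map (\<lambda>i. vs ! p i) [0..<Suc k]) = of_int (sign p) * tr g Y c vs"
    unfolding tr_def by (simp only: Y Y2 if_True eq)
qed

lemma bd_tr:
  assumes K: "K1 \<subseteq> Pow X"
  shows "tr g Y (bd K1 c) = bd ((`) f ` K1) (tr g Y c)"
proof
  fix us
  show "tr g Y (bd K1 c) us = bd ((`) f ` K1) (tr g Y c) us"
  proof (cases "set us \<subseteq> Y")
    case False
    then show ?thesis unfolding tr_def bd_def using K2_sub[OF K] by auto
  next
    case Y: True
    have inj: "inj_on g (set us)" using inj_on_subset[OF inj_g Y] .
    have cond: "(us \<noteq> [] \<and> distinct us \<and> set us \<in> (`) f ` K1) \<longleftrightarrow>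
       (map g us \<noteq> [] \<and> distinct (map g us) \<and> set (map g us) \<in> K1)"
      using imgK[OF K Y] inj by (auto simp: distinct_map)
    define S2 where "S2 = {w. w \<notin> set us \<and> insert w (set us) \<in> (`) f ` K1}"
    define S1 where "S1 = {w. w \<notin> g ` set us \<and> insert w (g ` set us) \<in> K1}"
    have S2Y: "S2 \<subseteq> Y" unfolding S2_def using K2_sub[OF K] by auto
    have S1eq: "g ` S2 = S1"
    proof
      show "g ` S2 \<subseteq> S1"
      proof
        fix x assume "x \<in> g ` S2"
        then obtain w where w: "w \<in> S2" "x = g w" by auto
        have wY: "w \<in> Y" using w S2Y by auto
        have "insert w (set us) \<subseteq> Y" using wY Y by auto
        then have "g ` insert w (set us) \<in> K1" using imgK[OF K] w unfolding S2_def by blast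
        moreover have "g w \<notin> g ` set us" using w inj_on_subset[OF inj_g, of "insert w (set us)"] wY Y
          unfolding S2_def by (auto simp: inj_on_def)
        ultimately show "x \<in> S1" unfolding S1_def using w by simp
      qed
    next
      show "S1 \<subseteq> g ` S2"
      proof
        fix x assume x: "x \<in> S1"
        then have xX: "x \<in> X" using K unfolding S1_def by auto
        have fx: "f x \<in> Y" "g (f x) = x" using fX gfx xX by auto
        have "g ` insert (f x) (set us) \<in> K1" using x fx unfolding S1_def by simp
        then have "insert (f x) (set us) \<in> (`) f ` K1" using imgK[OF K] Y fx by auto
        moreover have "f x \<notin> set us" using x fx unfolding S1_def by force
        ultimately have "f x \<in> S2" unfolding S2_def by simp
        then show "x \<in> g ` S2" using fx by force
      qed
    qed
    have injS: "inj_on g S2" using inj_on_subset[OF inj_g S2Y] .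
    have sumeq: "(\<Sum>w\<in>S1. c (w # map g us)) = (\<Sum>w\<in>S2. c (g w # map g us))"
      by (rule sum.reindex_cong[OF injS S1eq[symmetric]]) simp
    have sumeq2: "(\<Sum>w\<in>S2. tr g Y c (w # us)) = (\<Sum>w\<in>S2. c (g w # map g us))"
      using S2Y Y unfolding tr_def by (intro sum.cong) auto
    have L: "tr g Y (bd K1 c) us = (if map g us \<noteq> [] \<and> distinct (map g us) \<and> set (map g us) \<in> K1
        then (\<Sum>w\<in>S1. c (w # map g us)) else 0)"
      unfolding tr_def bd_def S1_def using Y by (simp only: if_True set_map)
    have R: "bd ((`) f ` K1) (tr g Y c) us = (if us \<noteq> [] \<and> distinct us \<and> set us \<in> (`) f ` K1
        then (\<Sum>w\<in>S2. tr g Y c (w # us)) else 0)"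
      unfolding bd_def S2_def by (rule refl)
    show ?thesis by (simp only: L R cond sumeq sumeq2)
  qed
qed

lemma tr_tr: "suppd X c \<Longrightarrow> tr f X (tr g Y c) = c"
proof
  fix vs assume s: "suppd X c"
  show "tr f X (tr g Y c) vs = c vs"
  proof (cases "set vs \<subseteq> X")
    case True
    then have "map g (map f vs) = vs" using gfx by (induct vs) auto
    moreover have "set (map f vs) \<subseteq> Y" using True fX by auto
    ultimately show ?thesis using True unfolding tr_def by simp
  next
    case False then show ?thesis using s unfolding tr_def suppd_def by auto
  qed
qed

lemma cycles_tr: assumes K: "K1 \<subseteq> Pow X" and c: "c \<in> cycles K1 k"
  shows "tr g Y c \<in> cycles ((`) f ` K1) k"
proof -
  have "bd ((`) f ` K1) (tr g Y c) = tr g Y (bd K1 c)" by (rule bd_tr[OF K, symmetric])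
  also have "\<dots> = tr g Y (\<lambda>_. 0)" using c unfolding cycles_def by simp
  also have "\<dots> = (\<lambda>_. 0)" by (simp add: tr_def)
  finally have "bd ((`) f ` K1) (tr g Y c) = (\<lambda>_. 0)" .
  moreover have "tr g Y c \<in> chains ((`) f ` K1) k" using c unfolding cycles_def by (intro chains_tr[OF K]) simp
  ultimately show ?thesis unfolding cycles_def by simp
qed

end




context bpair begin

lemma sw: "bpair Y X g f" by (rule bpair_swap[OF bpair_axioms])

lemma chains_eq: assumes K: "K1 \<subseteq> Pow X"
  shows "chains ((`) f ` K1) k = tr g Y ` (chains K1 k :: ('a list \<Rightarrow> 'f::field) set)"
proof
  show "tr g Y ` chains K1 k \<subseteq> chains ((`) f ` K1) k" using chains_tr[OF K] by blast
next
  interpret s: bpair Y X g f by (rule sw)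
  show "chains ((`) f ` K1) k \<subseteq> tr g Y ` (chains K1 k :: ('a list \<Rightarrow> 'f::field) set)"
  proof
    fix d :: "'b list \<Rightarrow> 'f" assume d: "d \<in> chains ((`) f ` K1) k"
    have "tr f X d \<in> chains ((`) g ` (`) f ` K1) k" by (rule s.chains_tr[OF K2_sub[OF K] d])
    then have "tr f X d \<in> chains K1 k" using KK[OF K] by simp
    moreover have "tr g Y (tr f X d) = d" using s.tr_tr chains_supp[OF K2_sub[OF K] d] by blast
    ultimately show "d \<in> tr g Y ` chains K1 k" by (metis image_eqI)
  qed
qed

lemma cycles_eq: assumes K: "K1 \<subseteq> Pow X"
  shows "cycles ((`) f ` K1) k = tr g Y ` (cycles K1 k :: ('a list \<Rightarrow> 'f::field) set)"
proof
  show "tr g Y ` cycles K1 k \<subseteq> cycles ((`) f ` K1) k" using cycles_tr[OF K] by blast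
next
  interpret s: bpair Y X g f by (rule sw)
  show "cycles ((`) f ` K1) k \<subseteq> tr g Y ` (cycles K1 k :: ('a list \<Rightarrow> 'f::field) set)"
  proof
    fix d :: "'b list \<Rightarrow> 'f" assume d: "d \<in> cycles ((`) f ` K1) k"
    have "tr f X d \<in> cycles ((`) g ` (`) f ` K1) k" by (rule s.cycles_tr[OF K2_sub[OF K] d])
    then have "tr f X d \<in> cycles K1 k" using KK[OF K] by simp
    moreover have "tr g Y (tr f X d) = d" using s.tr_tr chains_supp[OF K2_sub[OF K]] d
      unfolding cycles_def by blast
    ultimately show "d \<in> tr g Y ` cycles K1 k" by (metis image_eqI)
  qed
qed

lemma boundaries_eq: assumes K: "K1 \<subseteq> Pow X"
  shows "boundaries ((`) f ` K1) k = tr g Y ` (boundaries K1 k :: ('a list \<Rightarrow> 'f::field) set)"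
  by (simp add: boundaries_def chains_eq[OF K] image_image bd_tr[OF K])

lemma homology_eq: assumes K: "K1 \<subseteq> Pow X"
  shows "homology ((`) f ` K1) k = (`) (tr g Y) ` (homology K1 k :: ('a list \<Rightarrow> 'f::field) set set)"
  by (simp add: homology_def cycles_eq[OF K] boundaries_eq[OF K] image_image hclass_tr)

lemma suppd_add: "suppd A a \<Longrightarrow> suppd A b \<Longrightarrow> suppd A (\<lambda>v. a v + (b v :: 'f::field))"
  unfolding suppd_def
proof (intro allI impI)
  fix vs assume "\<forall>vs. a vs \<noteq> 0 \<longrightarrow> set vs \<subseteq> A" "\<forall>vs. b vs \<noteq> 0 \<longrightarrow> set vs \<subseteq> A" "a vs + b vs \<noteq> 0"
  moreover have "a vs \<noteq> 0 \<or> b vs \<noteq> 0" using \<open>a vs + b vs \<noteq> 0\<close> by auto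
  ultimately show "set vs \<subseteq> A" by blast
qed

lemma inj_tr: "inj_on (tr g Y) {c. suppd X c}"
  by (rule inj_on_inverseI[of _ "tr f X"]) (simp add: tr_tr)

lemma hom_inj: assumes K: "K1 \<subseteq> Pow X"
  shows "inj_on ((`) (tr g Y)) (homology K1 k :: ('a list \<Rightarrow> 'f::field) set set)"
proof (rule inj_on_image, rule inj_on_subset[OF inj_tr])
  show "\<Union> (homology K1 k :: ('a list \<Rightarrow> 'f::field) set set) \<subseteq> {c. suppd X c}"
  proof
    fix x :: "'a list \<Rightarrow> 'f" assume "x \<in> \<Union> (homology K1 k)"
    then obtain z b where "z \<in> cycles K1 k" "b \<in> boundaries K1 k" "x = (\<lambda>v. z v + b v)"
      unfolding homology_def hclass_def by auto
    moreover have "suppd X z" using chains_supp[OF K] \<open>z \<in> cycles K1 k\<close> unfolding cycles_def by blast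
    moreover have "suppd X b" using bd_supp[OF K] \<open>b \<in> boundaries K1 k\<close> unfolding boundaries_def by blast
    ultimately show "x \<in> {c. suppd X c}" using suppd_add by blast
  qed
qed

lemma ph_iso_bp:
  assumes K: "\<And>e. K1 e \<subseteq> Pow X"
    and mono: "\<And>e e'. e \<le> e' \<Longrightarrow> (boundaries (K1 e) k :: ('a list \<Rightarrow> 'f::field) set) \<subseteq> boundaries (K1 e') k"
  shows "ph_iso TYPE('f) K1 (\<lambda>e. (`) f ` K1 e) k"
  unfolding ph_iso_def
proof (intro exI[of _ "\<lambda>e S. tr g Y ` S"] conjI allI ballI impI)
  fix e
  show "bij_betw ((`) (tr g Y)) (homology (K1 e) k :: ('a list \<Rightarrow> 'f) set set) (homology ((`) f ` K1 e) k)"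
    unfolding bij_betw_def homology_eq[OF K] using hom_inj[OF K] by simp
next
  fix e and z w :: "'a list \<Rightarrow> 'f" and a :: 'f and z' w'
  assume z': "z' \<in> tr g Y ` hclass (boundaries (K1 e) k) z"
    and w': "w' \<in> tr g Y ` hclass (boundaries (K1 e) k) w"
  obtain b1 where b1: "b1 \<in> boundaries (K1 e) k" "z' = tr g Y (\<lambda>v. z v + b1 v)"
    using z' unfolding hclass_img by auto
  obtain b2 where b2: "b2 \<in> boundaries (K1 e) k" "w' = tr g Y (\<lambda>v. w v + b2 v)"
    using w' unfolding hclass_img by auto
  have bb: "(\<lambda>v. b1 v + b2 v) \<in> boundaries (K1 e) k" using bnd_add b1 b2 by blast
  have "(\<lambda>v. z' v + w' v) = tr g Y (\<lambda>v. (z v + w v) + (b1 v + b2 v))"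
    using b1 b2 by (simp add: tr_def fun_eq_iff algebra_simps)
  moreover have "(\<lambda>v. (z v + w v) + (b1 v + b2 v)) \<in> hclass (boundaries (K1 e) k) (\<lambda>v. z v + w v)"
    unfolding hclass_img using bb by (rule imageI)
  ultimately show "(\<lambda>v. z' v + w' v) \<in> tr g Y ` hclass (boundaries (K1 e) k) (\<lambda>v. z v + w v)"
    by (rule image_eqI)
  have ba: "(\<lambda>v. a * b1 v) \<in> boundaries (K1 e) k" using bnd_smult b1 by blast
  have "(\<lambda>v. a * z' v) = tr g Y (\<lambda>v. a * z v + a * b1 v)"
    using b1 by (simp add: tr_def fun_eq_iff algebra_simps)
  moreover have "(\<lambda>v. a * z v + a * b1 v) \<in> hclass (boundaries (K1 e) k) (\<lambda>v. a * z v)"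
    unfolding hclass_img using ba by (rule imageI)
  ultimately show "(\<lambda>v. a * z' v) \<in> tr g Y ` hclass (boundaries (K1 e) k) (\<lambda>v. a * z v)"
    by (rule image_eqI)
next
  fix e e' :: real and z :: "'a list \<Rightarrow> 'f" and z' :: "'b list \<Rightarrow> 'f"
  assume ee: "e \<le> e'" and z': "z' \<in> tr g Y ` hclass (boundaries (K1 e) k) z"
  obtain b1 where b1: "b1 \<in> boundaries (K1 e) k" "z' = tr g Y (\<lambda>v. z v + b1 v)"
    using z' unfolding hclass_img by auto
  have b1': "b1 \<in> boundaries (K1 e') k" using mono[OF ee] b1 by blast
  have tb: "tr g Y b1 \<in> boundaries ((`) f ` K1 e') k" using boundaries_eq[OF K] b1' by blast
  have "tr g Y ` hclass (boundaries (K1 e') k) z = hclass (boundaries ((`) f ` K1 e') k) (tr g Y z)"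
    by (simp add: hclass_tr boundaries_eq[OF K])
  also have "\<dots> = hclass (boundaries ((`) f ` K1 e') k) (\<lambda>v. tr g Y z v + tr g Y b1 v)"
    using hclass_shift[OF tb] by simp
  also have "(\<lambda>v. tr g Y z v + tr g Y b1 v) = z'" using b1 by (simp add: tr_add)
  finally show "tr g Y ` hclass (boundaries (K1 e') k) z = hclass (boundaries ((`) f ` K1 e') k) z'" .
qed

end




lemma rips_sub: "rips Z d e \<subseteq> Pow Z" unfolding rips_def by auto

lemma pairs_eq: "{d u v | u v. u \<in> s \<and> v \<in> s} = (\<lambda>(u,v). d u v) ` (s \<times> s)" by auto

lemma rips_down:
  assumes s: "s \<in> rips Z d e" and t: "t \<noteq> {}" "t \<subseteq> s"
  shows "t \<in> rips Z d e"
proof -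
  have fs: "finite s" "s \<subseteq> Z" and m: "Max {d u v | u v. u \<in> s \<and> v \<in> s} < e"
    using s unfolding rips_def by auto
  have ft: "finite t" using finite_subset[OF t(2) fs(1)] .
  have "Max {d u v | u v. u \<in> t \<and> v \<in> t} \<le> Max {d u v | u v. u \<in> s \<and> v \<in> s}"
    unfolding pairs_eq using t fs by (intro Max_mono) auto
  then show ?thesis using m t fs ft unfolding rips_def by auto
qed

lemma rips_img:
  assumes inj: "inj_on f Z" and iso: "\<And>u v. u \<in> Z \<Longrightarrow> v \<in> Z \<Longrightarrow> d2 (f u) (f v) = d1 u v"
  shows "rips (f ` Z) d2 e = (`) f ` rips Z d1 e"
proof -
  have pe: "{d2 u v | u v. u \<in> f ` s \<and> v \<in> f ` s} = {d1 u v | u v. u \<in> s \<and> v \<in> s}" if sZ: "s \<subseteq> Z" for s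
  proof -
    have "(\<lambda>(u,v). d2 u v) ` (f ` s \<times> f ` s) = (\<lambda>(u,v). d1 u v) ` (s \<times> s)"
      unfolding image_paired_Times[symmetric] image_image
    proof (rule image_cong[OF refl])
      fix x assume "x \<in> s \<times> s"
      then obtain u v where "x = (u, v)" "u \<in> Z" "v \<in> Z" using sZ by auto
      then show "(case (case x of (u, v) \<Rightarrow> (f u, f v)) of (u, v) \<Rightarrow> d2 u v) = (case x of (u, v) \<Rightarrow> d1 u v)"
        by (simp add: iso)
    qed
    then show ?thesis by (simp only: pairs_eq)
  qed
  have fin: "finite (f ` s) \<longleftrightarrow> finite s" if "s \<subseteq> Z" for s
    using finite_image_iff[OF inj_on_subset[OF inj that]] .
  show ?thesis
  proof
    show "rips (f ` Z) d2 e \<subseteq> (`) f ` rips Z d1 e"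
    proof
      fix t assume t: "t \<in> rips (f ` Z) d2 e"
      then have "t \<subseteq> f ` Z" unfolding rips_def by auto
      then obtain s where s: "s \<subseteq> Z" "t = f ` s" by (auto simp: subset_image_iff)
      have "s \<in> rips Z d1 e" using t s pe[OF s(1)] fin[OF s(1)] unfolding rips_def by auto
      then show "t \<in> (`) f ` rips Z d1 e" using s by blast
    qed
  next
    show "(`) f ` rips Z d1 e \<subseteq> rips (f ` Z) d2 e"
    proof
      fix t assume "t \<in> (`) f ` rips Z d1 e"
      then obtain s where s: "s \<in> rips Z d1 e" "t = f ` s" by auto
      then have sZ: "s \<subseteq> Z" unfolding rips_def by auto
      show "t \<in> rips (f ` Z) d2 e" using s pe[OF sZ] fin[OF sZ] sZ unfolding rips_def by auto
    qed
  qed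
qed

lemma chains_mono:
  assumes KK: "K \<subseteq> K'" and c: "c \<in> chains K j"
  shows "c \<in> chains K' j"
  unfolding chains_def mem_Collect_eq
proof (intro conjI allI impI ballI)
  fix vs assume "vs \<notin> osimplices K' j"
  then have "vs \<notin> osimplices K j" using KK unfolding osimplices_def by auto
  then show "c vs = 0" using chains_zero[OF c] by blast
next
  fix vs p assume vs: "vs \<in> osimplices K' j" and p: "p permutes {..<Suc j}"
  show "c (map (\<lambda>i. vs ! p i) [0..<Suc j]) = of_int (sign p) * c vs"
  proof (cases "vs \<in> osimplices K j")
    case True then show ?thesis using chains_alt[OF c True p] by simp
  next
    case False
    have len: "length vs = Suc j" using vs unfolding osimplices_def by auto
    have "set vs \<notin> K" using False vs unfolding osimplices_def by auto
    then have "map (\<lambda>i. vs ! p i) [0..<Suc j] \<notin> osimplices K j"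
      using set_perm_list[OF p len] unfolding osimplices_def by auto
    then show ?thesis using chains_zero[OF c] chains_zero[OF c False] by simp
  qed
qed

lemma bd_eq:
  assumes Z: "finite Z" and KK: "K \<subseteq> K'" and K': "K' \<subseteq> Pow Z"
    and down: "\<And>s t. s \<in> K \<Longrightarrow> t \<noteq> {} \<Longrightarrow> t \<subseteq> s \<Longrightarrow> t \<in> K"
    and c: "c \<in> chains K (Suc k)"
  shows "bd K c = bd K' c"
proof
  fix us
  define S where "S = {w. w \<notin> set us \<and> insert w (set us) \<in> K}"
  define S' where "S' = {w. w \<notin> set us \<and> insert w (set us) \<in> K'}"
  have L: "bd K c us = (if us \<noteq> [] \<and> distinct us \<and> set us \<in> K then (\<Sum>w\<in>S. c (w # us)) else 0)"
    unfolding bd_def S_def by (rule refl)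
  have R: "bd K' c us = (if us \<noteq> [] \<and> distinct us \<and> set us \<in> K' then (\<Sum>w\<in>S'. c (w # us)) else 0)"
    unfolding bd_def S'_def by (rule refl)
  have z: "c (w # us) = 0" if "insert w (set us) \<notin> K" for w
  proof -
    have "w # us \<notin> osimplices K (Suc k)" using that unfolding osimplices_def by auto
    then show ?thesis using chains_zero[OF c] by blast
  qed
  have "S' \<subseteq> Z" using K' unfolding S'_def by auto
  then have finS': "finite S'" using Z by (rule finite_subset)
  show "bd K c us = bd K' c us"
  proof (cases "us \<noteq> [] \<and> distinct us \<and> set us \<in> K")
    case True
    then have "set us \<in> K'" using KK by auto
    have SS: "S \<subseteq> S'" using KK unfolding S_def S'_def by auto
    have S0: "\<forall>w\<in>S' - S. c (w # us) = 0" using z unfolding S_def S'_def by auto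
    have sumeq: "(\<Sum>w\<in>S. c (w # us)) = (\<Sum>w\<in>S'. c (w # us))"
      by (rule sum.mono_neutral_left[OF finS' SS S0])
    have c1: "(us \<noteq> [] \<and> distinct us \<and> set us \<in> K) = True" using True by simp
    have c2: "(us \<noteq> [] \<and> distinct us \<and> set us \<in> K') = True" using True \<open>set us \<in> K'\<close> by simp
    show ?thesis unfolding L R c1 c2 if_True by (rule sumeq)
  next
    case F: False
    show ?thesis
    proof (cases "us \<noteq> [] \<and> distinct us \<and> set us \<in> K'")
      case False
      have d1: "(us \<noteq> [] \<and> distinct us \<and> set us \<in> K) = False" using F by simp
      have d2: "(us \<noteq> [] \<and> distinct us \<and> set us \<in> K') = False" using False by simp
      show ?thesis unfolding L R d1 d2 if_False by (rule refl)
    next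
      case True
      have nK: "set us \<notin> K" using F True by simp
      have "c (w # us) = 0" for w
      proof (rule z)
        show "insert w (set us) \<notin> K"
        proof
          assume "insert w (set us) \<in> K"
          then have "set us \<in> K" using down[of "insert w (set us)" "set us"] True by auto
          then show False using nK by simp
        qed
      qed
      then have s0: "(\<Sum>w\<in>S'. c (w # us)) = 0" by simp
      have d1: "(us \<noteq> [] \<and> distinct us \<and> set us \<in> K) = False" using F by simp
      have d2: "(us \<noteq> [] \<and> distinct us \<and> set us \<in> K') = True" using True by simp
      show ?thesis unfolding L R d1 d2 if_False if_True s0 by (rule refl)
    qed
  qed
qed

lemma bnd_mono:
  assumes Z: "finite Z" and KK: "K \<subseteq> K'" and K': "K' \<subseteq> Pow Z"
    and down: "\<And>s t. s \<in> K \<Longrightarrow> t \<noteq> {} \<Longrightarrow> t \<subseteq> s \<Longrightarrow> t \<in> K"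
  shows "(boundaries K k :: ('a list \<Rightarrow> 'f::field) set) \<subseteq> boundaries K' k"
proof
  fix b :: "'a list \<Rightarrow> 'f" assume "b \<in> boundaries K k"
  then obtain c where c: "c \<in> chains K (Suc k)" "b = bd K c" unfolding boundaries_def by auto
  have "bd K c = bd K' c" by (rule bd_eq[OF Z KK K' _ c(1)], erule (2) down)
  then have "b = bd K' c" using c by simp
  moreover have "c \<in> chains K' (Suc k)" using chains_mono[OF KK c(1)] .
  ultimately show "b \<in> boundaries K' k" unfolding boundaries_def by blast
qed

lemma ph_iso_rips:
  assumes Z: "finite Z" and inj: "inj_on f Z"
    and iso: "\<And>u v. u \<in> Z \<Longrightarrow> v \<in> Z \<Longrightarrow> d2 (f u) (f v) = d1 u v"
  shows "ph_iso TYPE('f::field) (rips Z d1) (rips (f ` Z) d2) k"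
proof -
  interpret b: bpair Z "f ` Z" f "the_inv_into Z f"
    by unfold_locales (auto simp: the_inv_into_f_f[OF inj] f_the_inv_into_f[OF inj] the_inv_into_into[OF inj])
  have eq: "rips (f ` Z) d2 = (\<lambda>e. (`) f ` rips Z d1 e)"
    by (intro ext rips_img[OF inj] iso)
  have mono: "(boundaries (rips Z d1 e) k :: ('a list \<Rightarrow> 'f) set) \<subseteq> boundaries (rips Z d1 e') k"
    if "e \<le> e'" for e e'
  proof (rule bnd_mono[OF Z _ rips_sub])
    show "rips Z d1 e \<subseteq> rips Z d1 e'" using that unfolding rips_def by auto
    show "\<And>s t. s \<in> rips Z d1 e \<Longrightarrow> t \<noteq> {} \<Longrightarrow> t \<subseteq> s \<Longrightarrow> t \<in> rips Z d1 e" by (rule rips_down)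
  qed
  show ?thesis unfolding eq by (rule b.ph_iso_bp[OF rips_sub mono])
qed




lemma sum_option: "(\<Sum>i\<in>(UNIV::'a::finite option set). h i) = h None + (\<Sum>a\<in>UNIV. h (Some a))"
  by (simp add: UNIV_option_conv sum.reindex)

lemma Rmat_some_some: "Rmat (Some a) (Some b :: 'm::finite option) =
   (if a = b then (1 + (real CARD('m) - 1) * sqrt (real CARD('m) + 1)) / (real CARD('m) * sqrt (real CARD('m) + 1))
    else (1 - sqrt (real CARD('m) + 1)) / (real CARD('m) * sqrt (real CARD('m) + 1)))"
  by (simp add: Rmat_def Let_def)

lemma Rmat_none_some: "Rmat None (Some b :: 'm::finite option) = - 1 / sqrt (real CARD('m) + 1)"
  by (simp add: Rmat_def Let_def)

lemma Rv_some:
  fixes v :: "real^'m::finite"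
  shows "(\<Sum>i\<in>UNIV. Rmat (Some a) i * pad0 v i) =
     v$a + ((1 - sqrt (real CARD('m) + 1)) / (real CARD('m) * sqrt (real CARD('m) + 1))) * (\<Sum>b\<in>UNIV. v$b)"
proof -
  define m where "m = real CARD('m)"
  define s where "s = sqrt (m + 1)"
  define \<beta> where "\<beta> = (1 - s) / (m * s)"
  have m0: "m > 0" unfolding m_def by simp
  have s0: "s > 0" unfolding s_def using m0 by simp
  have ab: "(1 + (m - 1) * s) / (m * s) = \<beta> + 1" unfolding \<beta>_def using m0 s0 by (simp add: field_simps)
  have "(\<Sum>i\<in>UNIV. Rmat (Some a) i * pad0 v i) = (\<Sum>b\<in>UNIV. Rmat (Some a) (Some b) * v$b)"
    by (simp add: sum_option pad0_def)
  also have "\<dots> = (\<Sum>b\<in>UNIV. \<beta> * v$b + (if a = b then v$b else 0))"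
  proof (rule sum.cong[OF refl])
    fix b
    have R: "Rmat (Some a) (Some b) = (if a = b then \<beta> + 1 else \<beta>)"
      unfolding Rmat_some_some ab[symmetric] unfolding \<beta>_def s_def m_def by (rule refl)
    show "Rmat (Some a) (Some b) * v $ b = \<beta> * v $ b + (if a = b then v $ b else 0)"
      unfolding R by (simp add: distrib_right)
  qed
  also have "\<dots> = v$a + \<beta> * (\<Sum>b\<in>UNIV. v$b)"
    by (simp add: sum.distrib sum_distrib_left)
  finally show ?thesis unfolding \<beta>_def s_def m_def .
qed

lemma Rv_none:
  fixes v :: "real^'m::finite"
  shows "(\<Sum>i\<in>UNIV. Rmat None i * pad0 v i) = - (\<Sum>b\<in>UNIV. v$b) / sqrt (real CARD('m) + 1)"
  by (simp add: sum_option pad0_def Rmat_none_some sum_divide_distrib[symmetric] sum_negf)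

lemma key_identity:
  fixes m s :: real
  assumes m0: "m > 0" and s0: "s > 0" and s2: "s^2 = m + 1"
  shows "2 * ((1 - s) / (m * s)) + m * ((1 - s) / (m * s))^2 + 1 / s^2 = 0"
proof -
  have "(2 * ((1 - s) / (m * s)) + m * ((1 - s) / (m * s))^2 + 1 / s^2) * (m * s^2)
        = 2 * (1 - s) * s + (1 - s)^2 + m"
    using m0 s0 by (simp add: field_simps power2_eq_square)
  also have "\<dots> = 1 - s^2 + m" by (simp add: power2_eq_square algebra_simps)
  also have "\<dots> = 0" using s2 by simp
  finally show ?thesis using m0 s0 by simp
qed

lemma R_norm:
  fixes v :: "real^'m::finite"
  shows "(\<Sum>j\<in>UNIV. (\<Sum>i\<in>UNIV. Rmat j i * pad0 v i)^2) = (\<Sum>a\<in>UNIV. (v$a)^2)"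
proof -
  define m where "m = real CARD('m)"
  define s where "s = sqrt (m + 1)"
  define \<beta> where "\<beta> = (1 - s) / (m * s)"
  define S where "S = (\<Sum>b\<in>UNIV. v$b)"
  have m0: "m > 0" unfolding m_def by simp
  have s0: "s > 0" unfolding s_def using m0 by simp
  have s2: "s^2 = m + 1" unfolding s_def using m0 by simp
  have "(\<Sum>j\<in>UNIV. (\<Sum>i\<in>UNIV. Rmat j i * pad0 v i)^2) = (- S / s)^2 + (\<Sum>a\<in>UNIV. (v$a + \<beta> * S)^2)"
  proof -
    have "(\<Sum>j\<in>UNIV. (\<Sum>i\<in>UNIV. Rmat j i * pad0 v i)^2) = (\<Sum>i\<in>UNIV. Rmat None i * pad0 v i)^2 + (\<Sum>a\<in>UNIV. (\<Sum>i\<in>UNIV. Rmat (Some a) i * pad0 v i)^2)"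
      by (rule sum_option)
    also have "\<dots> = (- S / s)^2 + (\<Sum>a\<in>UNIV. (v$a + \<beta> * S)^2)"
      unfolding S_def \<beta>_def s_def m_def Rv_some Rv_none by (rule refl)
    finally show ?thesis .
  qed
  also have "(\<Sum>a\<in>UNIV. (v$a + \<beta> * S)^2) = (\<Sum>a\<in>UNIV. (v$a)^2) + 2 * \<beta> * S * S + m * (\<beta> * S)^2"
  proof -
    have "(\<Sum>a\<in>UNIV. (v$a + \<beta> * S)^2) = (\<Sum>a\<in>UNIV. (v$a)^2 + (2 * \<beta> * S) * v$a + (\<beta> * S)^2)"
      by (rule sum.cong[OF refl]) (simp add: power2_eq_square algebra_simps)
    also have "\<dots> = (\<Sum>a\<in>UNIV. (v$a)^2) + (2 * \<beta> * S) * (\<Sum>a\<in>UNIV. v$a) + m * (\<beta> * S)^2"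
      by (simp add: sum.distrib sum_distrib_left[symmetric] m_def)
    finally show ?thesis unfolding S_def by simp
  qed
  also have "(- S / s)^2 + ((\<Sum>a\<in>UNIV. (v$a)^2) + 2 * \<beta> * S * S + m * (\<beta> * S)^2)
     = (\<Sum>a\<in>UNIV. (v$a)^2) + S^2 * (2 * \<beta> + m * \<beta>^2 + 1 / s^2)"
    by (simp add: power2_eq_square field_simps)
  also have "2 * \<beta> + m * \<beta>^2 + 1 / s^2 = 0" unfolding \<beta>_def by (rule key_identity[OF m0 s0 s2])
  finally show ?thesis by simp
qed

lemma hs_diag:
  fixes A B :: "real^'n::finite"
  shows "hs_dist (\<chi> i j. if i = j then complex_of_real (A $ j) else 0) (\<chi> i j. if i = j then complex_of_real (B $ j) else 0)
     = sqrt (\<Sum>j\<in>UNIV. (A$j - B$j)^2)"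
proof -
  define P :: "complex^'n^'n" where "P = (\<chi> i j. if i = j then complex_of_real (A $ j) else 0)"
  define Q :: "complex^'n^'n" where "Q = (\<chi> i j. if i = j then complex_of_real (B $ j) else 0)"
  have D: "(P - Q) $ k $ i = (if k = i then complex_of_real (A$i - B$i) else 0)" for k i
    by (simp add: P_def Q_def)
  have dd: "(mat_adj (P - Q) ** (P - Q)) $ i $ i = complex_of_real ((A$i - B$i)^2)" for i
  proof -
    have "(mat_adj (P - Q) ** (P - Q)) $ i $ i = (\<Sum>k\<in>UNIV. cnj ((P - Q) $ k $ i) * (P - Q) $ k $ i)"
      by (simp add: matrix_matrix_mult_def mat_adj_def)
    also have "\<dots> = (\<Sum>k\<in>UNIV. if k = i then complex_of_real ((A$i - B$i)^2) else 0)"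
    proof (rule sum.cong[OF refl])
      fix k
      show "cnj ((P - Q) $ k $ i) * (P - Q) $ k $ i = (if k = i then complex_of_real ((A$i - B$i)^2) else 0)"
        unfolding D by (simp add: power2_eq_square)
    qed
    also have "\<dots> = complex_of_real ((A$i - B$i)^2)" by simp
    finally show ?thesis .
  qed
  have "Re (trace (mat_adj (P - Q) ** (P - Q))) = (\<Sum>j\<in>UNIV. (A$j - B$j)^2)"
    by (simp add: trace_def dd)
  then show ?thesis unfolding hs_dist_def P_def Q_def by simp
qed

lemma unif_diff:
  fixes X :: "(real^'m::finite) set"
  shows "unif_transf X x $ j - unif_transf X y $ j =
    (1 / (rad_pc X * sqrt (real CARD('m) * (real CARD('m) + 1)))) * (\<Sum>i\<in>UNIV. Rmat j i * pad0 (x - y) i)"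
proof -
  have p: "pad0 (x - mean_pt X) i - pad0 (y - mean_pt X) i = pad0 (x - y) i" for i
    by (cases i) (auto simp: pad0_def)
  have "(\<Sum>i\<in>UNIV. Rmat j i * pad0 (x - mean_pt X) i) - (\<Sum>i\<in>UNIV. Rmat j i * pad0 (y - mean_pt X) i)
      = (\<Sum>i\<in>UNIV. Rmat j i * pad0 (x - y) i)"
    by (simp add: sum_subtractf[symmetric] right_diff_distrib[symmetric] p)
  then show ?thesis unfolding unif_transf_def by (simp add: diff_divide_distrib[symmetric])
qed

lemma norm_vec_sq: "norm (v :: real^'m::finite) = sqrt (\<Sum>a\<in>UNIV. (v$a)^2)"
  by (simp add: norm_vec_def L2_set_def)

lemma hs_rho:
  fixes X :: "(real^'m::finite) set"
  assumes lam: "rad_pc X * sqrt (real CARD('m) * (real CARD('m) + 1)) > 0"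
  shows "(rad_pc X * sqrt (real CARD('m) * (real CARD('m) + 1))) * hs_dist (rho_utd X x) (rho_utd X y) = dist x y"
proof -
  define L where "L = rad_pc X * sqrt (real CARD('m) * (real CARD('m) + 1))"
  have L0: "L > 0" using lam unfolding L_def .
  have "hs_dist (rho_utd X x) (rho_utd X y) = sqrt (\<Sum>j\<in>UNIV. (unif_transf X x $ j - unif_transf X y $ j)^2)"
    unfolding rho_utd_def by (rule hs_diag)
  also have "\<dots> = sqrt (\<Sum>j\<in>UNIV. (\<Sum>i\<in>UNIV. Rmat j i * pad0 (x - y) i)^2 / L^2)"
    by (simp add: unif_diff L_def power_divide)
  also have "\<dots> = sqrt ((\<Sum>j\<in>UNIV. (\<Sum>i\<in>UNIV. Rmat j i * pad0 (x - y) i)^2) / L^2)"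
    by (simp add: sum_divide_distrib)
  also have "\<dots> = sqrt ((\<Sum>a\<in>UNIV. ((x - y)$a)^2) / L^2)"
    by (simp only: R_norm)
  also have "\<dots> = (1 / L) * norm (x - y)"
    using L0 by (simp add: real_sqrt_divide norm_vec_sq)
  finally have "hs_dist (rho_utd X x) (rho_utd X y) = (1 / L) * dist x y" by (simp add: dist_norm)
  then show ?thesis using L0 unfolding L_def[symmetric] by simp
qed

lemma rad_pos:
  fixes X :: "(real^'m::finite) set"
  assumes fin: "finite X" and c2: "card X \<ge> 2"
  shows "rad_pc X > 0"
proof -
  obtain a where a: "a \<in> X" using c2 by fastforce
  have "card (X - {a}) \<ge> 1" using c2 a fin by simp
  then have "X - {a} \<noteq> {}"
  proof (intro notI)
    assume "X - {a} = {}"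
    then have "card (X - {a}) = 0" by (simp only: card.empty)
    then show False using \<open>card (X - {a}) \<ge> 1\<close> by simp
  qed
  then obtain b where b: "b \<in> X" "b \<noteq> a" by blast
  have fp: "finite {dist u v | u v. u \<in> X \<and> v \<in> X}"
  proof -
    have "{dist u v | u v. u \<in> X \<and> v \<in> X} = (\<lambda>(u,v). dist u v) ` (X \<times> X)" by auto
    then show ?thesis using fin by simp
  qed
  have "dist a b \<le> diam_pc X" unfolding diam_pc_def
    by (rule Max_ge[OF fp]) (use a b in blast)
  moreover have "dist a b > 0" using b by simp
  ultimately have "diam_pc X > 0" by linarith
  then show ?thesis unfolding rad_pc_def by simp
qed


theorem mainTheorem3:
  fixes X :: "(real^'m::finite) set"
  assumes "finite X" and "card X \<ge> 2"
  shows "\<forall>k. ph_iso TYPE('f::field) (rips X dist)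
           (rips (rho_utd X ` X)
              (\<lambda>p q. (rad_pc X * sqrt (real CARD('m) * (real CARD('m) + 1))) * hs_dist p q)) k"
proof -
  have Lpos: "rad_pc X * sqrt (real CARD('m) * (real CARD('m) + 1)) > 0"
    using rad_pos[OF assms] by simp
  have inj: "inj_on (rho_utd X) X"
  proof (rule inj_onI)
    fix u v assume uv: "u \<in> X" "v \<in> X" "rho_utd X u = rho_utd X v"
    have "dist u v = (rad_pc X * sqrt (real CARD('m) * (real CARD('m) + 1))) * hs_dist (rho_utd X u) (rho_utd X v)"
      using hs_rho[OF Lpos] by simp
    also have "\<dots> = (rad_pc X * sqrt (real CARD('m) * (real CARD('m) + 1))) * hs_dist (rho_utd X u) (rho_utd X u)"
      using uv(3) by simp
    also have "\<dots> = dist u u" using hs_rho[OF Lpos] by simp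
    finally show "u = v" by simp
  qed
  show ?thesis
    by (intro allI ph_iso_rips[OF assms(1) inj]) (simp add: hs_rho[OF Lpos])
qed

end
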